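(* Let $U,U'\subset\mathbb{R}^n$ be arbitrary subsets and $h\colon U\to\mathbb{R}^n$, $h'\colon U'\to\mathbb{R}^n$ maps such that for every $r\ge0$ the spaces $HU_r$, $H\operatorname{Gr}(h)_r$, $Hh(U)_r$ (and likewise for $h'$) are finite dimensional, so that the $\mathbb{R}$-persistence modules $M^h$, $M^{h'}$ are defined. Then $$d_I(M^h,M^{h'})\le d_H(\operatorname{Gr}(h),\operatorname{Gr}(h')),$$ where $d_H$ is the Hausdorff distance induced by $d_{\mathbb{R}^n\times\mathbb{R}^n}$.
   Context: Fix a field $K$; $H$ is homology (in a fixed degree) with coefficients in $K$. On $\mathbb{R}^n$ use the Euclidean metric $d_{\mathbb{R}^n}$; on $\mathbb{R}^n\times\mathbb{R}^n$ use $d_{\mathbb{R}^n\times\mathbb{R}^n}((x_1,y_1),(x_2,y_2))=\max\{d_{\mathbb{R}^n}(x_1,x_2),d_{\mathbb{R}^n}(y_1,y_2)\}$. For a subset $U$ of either space and $r\ge0$, $U_r:=\{z:\inf_{u\in U}d(z,u)\le r\}$. For $h\colon U\to\mathbb{R}^n$, $\operatorname{Gr}(h)=\{(u,h(u)):u\in U\}$. For each $r\ge0$ the projections give a diagram $U_r\leftarrow\operatorname{Gr}(h)_r\rightarrow h(U)_r$, and applying $H$ gives a representation $V_r$ of the quiver $1\leftarrow2\rightarrow3$; for $s\le r$ inclusions induce a morphism $V_s\to V_r$. Interval representations $\mathbb{I}[b,d]$ ($1\le b\le d\le3$) have $K$ at vertices $b,\dots,d$, $0$ elsewhere, identity maps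 between copies of $K$ and zero otherwise. Choose for each $r$ an isomorphism $\eta_r\colon V_r\to\bigoplus_{b\le d}\mathbb{I}[b,d]^{m^r_{b,d}}$, and for $s\le r$ let $\phi(s,r):=\pi_r\circ\eta_r\circ(V_s\to V_r)\circ\eta_s^{-1}\circ\iota_s\colon\mathbb{I}[1,3]^{m^s_{1,3}}\to\mathbb{I}[1,3]^{m^r_{1,3}}$ ($\iota_s$ the summand inclusion, $\pi_r$ the summand projection), identified with a linear map $K^{m^s_{1,3}}\to K^{m^r_{1,3}}$. The $\mathbb{R}$-persistence module $M^h$ is $r\mapsto K^{m^r_{1,3}}$ ($0$ for $r<0$) with these transition maps; it is well defined up to isomorphism. An $\mathbb{R}$-persistence module is a functor from $(\mathbb{R},\le)$ to finite-dimensional $K$-vector spaces with transition maps $\varphi_M(s,t)$; $M(\delta)_t:=M_{t+\delta}$; $\varphi_M(\delta)_t:=\varphi_M(t,t+\delta)$. $M,N$ are $\delta$-interleaved if there are morphisms $f\colon M\to N(\delta)$, $g\colon N\to M(\delta)$ with $g(\delta)f=\varphi_M(2\delta)$, $f(\delta)g=\varphi_N(2\delta)$; $d_I(M,N)$ is the infimum of such $\delta$. *)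

theory Defs
  imports "HOL-Analysis.Analysis" "HOL-Homology.Homology"
begin

text \<open>All homology spaces are spaces of cycles
modulo boundaries; linear maps out of homology are represented as linear maps on
cycles vanishing exactly on boundaries (for isomorphisms).\<close>

type_synonym ('a,'k) kchain = "((nat \<Rightarrow> real) \<Rightarrow> 'a) \<Rightarrow> 'k"

definition ksupp :: "('a,'k::zero) kchain \<Rightarrow> ((nat \<Rightarrow> real) \<Rightarrow> 'a) set" where
  "ksupp c = {f. c f \<noteq> 0}"

definition kchain :: "nat \<Rightarrow> 'a::topological_space set \<Rightarrow> ('a,'k::zero) kchain \<Rightarrow> bool" where
  "kchain p X c \<longleftrightarrow> finite (ksupp c) \<and>
     (\<forall>f \<in> ksupp c. singular_simplex p (subtopology euclidean X) f)"

definition kbd :: "nat \<Rightarrow> ('a,'k::field) kchain \<Rightarrow> ('a,'k) kchain" where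
  "kbd p c = (if p = 0 then (\<lambda>_. 0) else
     (\<lambda>g. \<Sum>f \<in> ksupp c. \<Sum>k\<le>p. if singular_face p k f = g then (-1)^k * c f else 0))"

definition kpush :: "nat \<Rightarrow> ('a \<Rightarrow> 'b) \<Rightarrow> ('a,'k::field) kchain \<Rightarrow> ('b,'k) kchain" where
  "kpush p g c = (\<lambda>\<sigma>. \<Sum>f \<in> ksupp c. if simplex_map p g f = \<sigma> then c f else 0)"

definition kcycles :: "nat \<Rightarrow> 'a::topological_space set \<Rightarrow> ('a,'k::field) kchain set" where
  "kcycles p X = {c. kchain p X c \<and> kbd p c = (\<lambda>_. 0)}"

definition kboundaries :: "nat \<Rightarrow> 'a::topological_space set \<Rightarrow> ('a,'k::field) kchain set" where
  "kboundaries p X = {kbd (Suc p) c | c. kchain (Suc p) X c}"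

definition kfindim :: "'k::field itself \<Rightarrow> nat \<Rightarrow> 'a::topological_space set \<Rightarrow> bool" where
  "kfindim _ p X \<longleftrightarrow> (\<exists>F::('a,'k) kchain set. finite F \<and> F \<subseteq> kcycles p X \<and>
     (\<forall>z \<in> kcycles p X. \<exists>a. (\<lambda>\<sigma>. z \<sigma> - (\<Sum>w\<in>F. a w * w \<sigma>)) \<in> kboundaries p X))"

text \<open>The model representation (sum of interval modules I[b,d]^(m(b,d))):
at vertex i it has basis the triples (b,d,j) with 1 <= b <= i <= d <= 3 and j < m(b,d).\<close>

definition model_space :: "(nat \<times> nat \<Rightarrow> nat) \<Rightarrow> nat \<Rightarrow> (nat \<times> nat \<times> nat \<Rightarrow> 'k::zero) set" where
  "model_space m i = {v. \<forall>b d j. v (b,d,j) \<noteq> 0 \<longrightarrow>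
       1 \<le> b \<and> b \<le> i \<and> i \<le> d \<and> d \<le> 3 \<and> j < m (b,d)}"

text \<open>structure map vertex 2 -> vertex 1 (identity on summands I[1,2], I[1,3], zero otherwise)\<close>
definition model_21 :: "(nat \<times> nat \<times> nat \<Rightarrow> 'k::zero) \<Rightarrow> (nat \<times> nat \<times> nat \<Rightarrow> 'k)" where
  "model_21 v = (\<lambda>(b,d,j). if b = 1 then v (b,d,j) else 0)"

text \<open>structure map vertex 2 -> vertex 3 (identity on summands I[1,3], I[2,3], zero otherwise)\<close>
definition model_23 :: "(nat \<times> nat \<times> nat \<Rightarrow> 'k::zero) \<Rightarrow> (nat \<times> nat \<times> nat \<Rightarrow> 'k)" where
  "model_23 v = (\<lambda>(b,d,j). if d = 3 then v (b,d,j) else 0)"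

definition hom_iso :: "nat \<Rightarrow> 'a::topological_space set \<Rightarrow> (nat \<times> nat \<Rightarrow> nat) \<Rightarrow> nat
     \<Rightarrow> (('a,'k::field) kchain \<Rightarrow> (nat \<times> nat \<times> nat \<Rightarrow> 'k)) \<Rightarrow> bool" where
  "hom_iso p X m i e \<longleftrightarrow>
     (\<forall>z \<in> kcycles p X. e z \<in> model_space m i) \<and>
     (\<forall>v \<in> model_space m i. \<exists>z \<in> kcycles p X. e z = v) \<and>
     (\<forall>z \<in> kcycles p X. \<forall>w \<in> kcycles p X. e (\<lambda>\<sigma>. z \<sigma> + w \<sigma>) = (\<lambda>x. e z x + e w x)) \<and>
     (\<forall>z \<in> kcycles p X. \<forall>c. e (\<lambda>\<sigma>. c * z \<sigma>) = (\<lambda>x. c * e z x)) \<and>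
     (\<forall>z \<in> kcycles p X. e z = (\<lambda>_. 0) \<longleftrightarrow> z \<in> kboundaries p X)"

text \<open>(e1,e2,e3) is an isomorphism from the representation
  H_p(X1) <- H_p(X2) -> H_p(X3) (maps induced by fst, snd) onto the model
  representation with multiplicities m.\<close>
definition is_decomp :: "nat \<Rightarrow> 'a::topological_space set \<Rightarrow> ('a \<times> 'b::topological_space) set \<Rightarrow> 'b set
     \<Rightarrow> (nat \<times> nat \<Rightarrow> nat)
     \<Rightarrow> (('a,'k::field) kchain \<Rightarrow> (nat \<times> nat \<times> nat \<Rightarrow> 'k))
     \<Rightarrow> (('a \<times> 'b,'k) kchain \<Rightarrow> (nat \<times> nat \<times> nat \<Rightarrow> 'k))
     \<Rightarrow> (('b,'k) kchain \<Rightarrow> (nat \<times> nat \<times> nat \<Rightarrow> 'k)) \<Rightarrow> bool" where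
  "is_decomp p X1 X2 X3 m e1 e2 e3 \<longleftrightarrow>
     hom_iso p X1 m 1 e1 \<and> hom_iso p X2 m 2 e2 \<and> hom_iso p X3 m 3 e3 \<and>
     (\<forall>z \<in> kcycles p X2. e1 (kpush p fst z) = model_21 (e2 z)) \<and>
     (\<forall>z \<in> kcycles p X2. e3 (kpush p snd z) = model_23 (e2 z))"

text \<open>An R-persistence module: dimension function and transition maps on K^(dim t),
  where K^m is represented as functions nat => K vanishing from index m on.\<close>
type_synonym 'k pmod = "(real \<Rightarrow> nat) \<times> (real \<Rightarrow> real \<Rightarrow> (nat \<Rightarrow> 'k) \<Rightarrow> (nat \<Rightarrow> 'k))"

definition kvec :: "nat \<Rightarrow> (nat \<Rightarrow> 'k::zero) set" where
  "kvec m = {x. \<forall>j\<ge>m. x j = 0}"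

definition pm_dim :: "'k pmod \<Rightarrow> real \<Rightarrow> nat" where "pm_dim M = fst M"
definition pm_tr :: "'k pmod \<Rightarrow> real \<Rightarrow> real \<Rightarrow> (nat \<Rightarrow> 'k) \<Rightarrow> (nat \<Rightarrow> 'k)" where "pm_tr M = snd M"

definition pmorph :: "real \<Rightarrow> 'k::field pmod \<Rightarrow> 'k pmod \<Rightarrow> (real \<Rightarrow> (nat \<Rightarrow> 'k) \<Rightarrow> (nat \<Rightarrow> 'k)) \<Rightarrow> bool" where
  "pmorph \<delta> M N f \<longleftrightarrow>
     (\<forall>t. \<forall>x \<in> kvec (pm_dim M t). f t x \<in> kvec (pm_dim N (t + \<delta>))) \<and>
     (\<forall>t. \<forall>x \<in> kvec (pm_dim M t). \<forall>y \<in> kvec (pm_dim M t).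
         f t (\<lambda>j. x j + y j) = (\<lambda>j. f t x j + f t y j)) \<and>
     (\<forall>t. \<forall>x \<in> kvec (pm_dim M t). \<forall>c. f t (\<lambda>j. c * x j) = (\<lambda>j. c * f t x j)) \<and>
     (\<forall>s t. s \<le> t \<longrightarrow> (\<forall>x \<in> kvec (pm_dim M s).
         f t (pm_tr M s t x) = pm_tr N (s + \<delta>) (t + \<delta>) (f s x)))"

definition interleaved :: "real \<Rightarrow> 'k::field pmod \<Rightarrow> 'k pmod \<Rightarrow> bool" where
  "interleaved \<delta> M N \<longleftrightarrow> (\<exists>f g. pmorph \<delta> M N f \<and> pmorph \<delta> N M g \<and>
     (\<forall>t. \<forall>x \<in> kvec (pm_dim M t). g (t + \<delta>) (f t x) = pm_tr M t (t + 2 * \<delta>) x) \<and>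
     (\<forall>t. \<forall>x \<in> kvec (pm_dim N t). f (t + \<delta>) (g t x) = pm_tr N t (t + 2 * \<delta>) x))"

definition interleaving_distance :: "'k::field pmod \<Rightarrow> 'k pmod \<Rightarrow> ereal" where
  "interleaving_distance M N = Inf {ereal \<delta> | \<delta>. 0 \<le> \<delta> \<and> interleaved \<delta> M N}"

definition embed13 :: "(nat \<times> nat \<Rightarrow> nat) \<Rightarrow> (nat \<Rightarrow> 'k::zero) \<Rightarrow> (nat \<times> nat \<times> nat \<Rightarrow> 'k)" where
  "embed13 m x = (\<lambda>(b,d,j). if b = 1 \<and> d = 3 \<and> j < m (1,3) then x j else 0)"

definition extract13 :: "(nat \<times> nat \<Rightarrow> nat) \<Rightarrow> (nat \<times> nat \<times> nat \<Rightarrow> 'k::zero) \<Rightarrow> (nat \<Rightarrow> 'k)" where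
  "extract13 m v = (\<lambda>j. if j < m (1,3) then v (1,3,j) else 0)"

text \<open>Given the spaces G r (= Gr(h)_r), multiplicities m r and the vertex-2 components
  e2 r of the chosen decompositions, phi(s,r) = pi_r o eta_r o (V_s -> V_r) o eta_s^-1 o iota_s.\<close>
definition pmod_of :: "nat \<Rightarrow> (real \<Rightarrow> ('a::topological_space) set) \<Rightarrow> (real \<Rightarrow> nat \<times> nat \<Rightarrow> nat)
     \<Rightarrow> (real \<Rightarrow> ('a,'k::field) kchain \<Rightarrow> (nat \<times> nat \<times> nat \<Rightarrow> 'k)) \<Rightarrow> 'k pmod" where
  "pmod_of p G m e2 =
     ((\<lambda>t. if t < 0 then 0 else m t (1,3)),
      (\<lambda>s t x. if 0 \<le> s \<and> s \<le> t then
           extract13 (m t) (e2 t (SOME z. z \<in> kcycles p (G s) \<and> e2 s z = embed13 (m s) x))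
         else (\<lambda>_. 0)))"

definition thick :: "('a::metric_space) set \<Rightarrow> real \<Rightarrow> 'a set" where
  "thick S r = {z. S \<noteq> {} \<and> (INF u\<in>S. dist z u) \<le> r}"

definition dmax :: "('a::metric_space \<times> 'a) \<Rightarrow> ('a \<times> 'a) \<Rightarrow> real" where
  "dmax z w = max (dist (fst z) (fst w)) (dist (snd z) (snd w))"

definition thick2 :: "('a::metric_space \<times> 'a) set \<Rightarrow> real \<Rightarrow> ('a \<times> 'a) set" where
  "thick2 S r = {z. S \<noteq> {} \<and> (INF u\<in>S. dmax z u) \<le> r}"

definition hausdorff2 :: "('a::metric_space \<times> 'a) set \<Rightarrow> ('a \<times> 'a) set \<Rightarrow> ereal" where
  "hausdorff2 A B = Inf {ereal \<delta> | \<delta>. 0 \<le> \<delta> \<and> A \<subseteq> thick2 B \<delta> \<and> B \<subseteq> thick2 A \<delta>}"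

definition graph :: "('a \<Rightarrow> 'b) \<Rightarrow> 'a set \<Rightarrow> ('a \<times> 'b) set" where
  "graph h U = {(u, h u) | u. u \<in> U}"

end

theory Submission
  imports Defs
begin

lemma kbd_sum:
  assumes "finite S" "ksupp c \<subseteq> S" "p \<noteq> 0"
  shows "kbd p c g = (\<Sum>f\<in>S. \<Sum>k\<le>p. if singular_face p k f = g then (-1)^k * c f else 0)"
proof -
  have "(\<Sum>f\<in>ksupp c. \<Sum>k\<le>p. if singular_face p k f = g then (-1)^k * c f else 0)
     = (\<Sum>f\<in>S. \<Sum>k\<le>p. if singular_face p k f = g then (-1)^k * c f else 0)"
  proof (rule sum.mono_neutral_left)
    show "\<forall>i\<in>S - ksupp c. (\<Sum>k\<le>p. if singular_face p k i = g then (-1)^k * c i else 0) = 0"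
    proof
      fix i assume "i \<in> S - ksupp c"
      then have "c i = 0" by (simp add: ksupp_def)
      then show "(\<Sum>k\<le>p. if singular_face p k i = g then (-1)^k * c i else 0) = 0"
        by (simp only: mult_zero_right if_cancel sum.neutral_const)
    qed
  qed (use assms in auto)
  then show ?thesis using assms by (simp only: kbd_def if_False)
qed

lemma kpush_sum:
  assumes "finite S" "ksupp c \<subseteq> S"
  shows "kpush p g c \<sigma> = (\<Sum>f\<in>S. if simplex_map p g f = \<sigma> then c f else 0)"
  unfolding kpush_def using assms
  by (intro sum.mono_neutral_left) (auto simp: ksupp_def)

lemma ksupp_add: "ksupp (\<lambda>\<sigma>. z \<sigma> + w \<sigma>) \<subseteq> ksupp z \<union> ksupp (w::('a,'k::field) kchain)"
  by (auto simp: ksupp_def)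

lemma ksupp_scale: "ksupp (\<lambda>\<sigma>. a * z \<sigma>) \<subseteq> ksupp (z::('a,'k::field) kchain)"
  by (auto simp: ksupp_def)

lemma kchain_add: "kchain p X (z::('a::topological_space,'k::field) kchain) \<Longrightarrow> kchain p X w \<Longrightarrow> kchain p X (\<lambda>\<sigma>. z \<sigma> + w \<sigma>)"
  unfolding kchain_def using ksupp_add[of z w]
  by (meson Un_iff finite_UnI finite_subset subsetD)

lemma kchain_scale: "kchain p X (z::('a::topological_space,'k::field) kchain) \<Longrightarrow> kchain p X (\<lambda>\<sigma>. (a::'k::field) * z \<sigma>)"
  unfolding kchain_def using ksupp_scale[of a z]
  by (meson finite_subset subsetD)

lemma gen_add:
  "(\<Sum>f\<in>S. \<Sum>k\<in>K. if P f k then t k * (a f + b f) else 0) =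
   (\<Sum>f\<in>S. \<Sum>k\<in>K. if P f k then t k * a f else 0) +
   (\<Sum>f\<in>S. \<Sum>k\<in>K. if P f k then t k * b f else (0::'k::field))"
  by (simp add: sum.distrib[symmetric]) (intro sum.cong refl, simp add: distrib_left)

lemma gen_scale:
  "(\<Sum>f\<in>S. \<Sum>k\<in>K. if P f k then t k * (c * a f) else 0) =
   c * (\<Sum>f\<in>S. \<Sum>k\<in>K. if P f k then t k * a f else (0::'k::field))"
  by (simp add: sum_distrib_left) (intro sum.cong refl, simp add: mult.left_commute)

lemma kbd_add:
  assumes "finite (ksupp z)" "finite (ksupp w)"
  shows "kbd p (\<lambda>\<sigma>. z \<sigma> + w \<sigma>) g = kbd p z g + kbd p (w::('a,'k::field) kchain) g"
proof (cases "p = 0")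
  case True then show ?thesis by (simp add: kbd_def)
next
  case False
  let ?S = "ksupp z \<union> ksupp w"
  have fS: "finite ?S" using assms by auto
  have 1: "kbd p z g = (\<Sum>f\<in>?S. \<Sum>k\<le>p. if singular_face p k f = g then (-1)^k * z f else 0)"
    by (rule kbd_sum[OF fS _ False]) blast
  have 2: "kbd p w g = (\<Sum>f\<in>?S. \<Sum>k\<le>p. if singular_face p k f = g then (-1)^k * w f else 0)"
    by (rule kbd_sum[OF fS _ False]) blast
  show ?thesis
    unfolding kbd_sum[OF fS ksupp_add False, of g] 1 2
    by (rule gen_add[where P="\<lambda>f k. singular_face p k f = g" and t="\<lambda>k. (-1)^k" and a=z and b=w and S="?S" and K="{..p}"])
qed

lemma kbd_scale:
  assumes "finite (ksupp z)"
  shows "kbd p (\<lambda>\<sigma>. a * z \<sigma>) g = a * kbd p (z::('a,'k::field) kchain) g"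
proof (cases "p = 0")
  case True then show ?thesis by (simp add: kbd_def)
next
  case False
  have 1: "kbd p z g = (\<Sum>f\<in>ksupp z. \<Sum>k\<le>p. if singular_face p k f = g then (-1)^k * z f else 0)"
    by (rule kbd_sum[OF assms _ False]) blast
  show ?thesis
    unfolding kbd_sum[OF assms ksupp_scale[of a z] False, of g] 1
    by (rule gen_scale[where P="\<lambda>f k. singular_face p k f = g" and t="\<lambda>k. (-1)^k" and c=a and a=z and S="ksupp z" and K="{..p}"])
qed

lemma kcycles_add: 
  assumes "z \<in> kcycles p X" "w \<in> kcycles p X" shows "(\<lambda>\<sigma>. z \<sigma> + w \<sigma>) \<in> kcycles p X"
proof -
  have c: "kchain p X z" "kchain p X w" "kbd p z = (\<lambda>_. 0)" "kbd p w = (\<lambda>_. 0)"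
    using assms by (auto simp: kcycles_def)
  then have "finite (ksupp z)" "finite (ksupp w)" by (auto simp: kchain_def)
  then have "kbd p (\<lambda>\<sigma>. z \<sigma> + w \<sigma>) = (\<lambda>_. 0)"
    using kbd_add c(3,4) by (metis add_0)
  then show ?thesis using kchain_add[OF c(1,2)] by (simp add: kcycles_def)
qed

lemma kcycles_scale: 
  assumes "z \<in> kcycles p X" shows "(\<lambda>\<sigma>. a * z \<sigma>) \<in> kcycles p X"
proof -
  have c: "kchain p X z" "kbd p z = (\<lambda>_. 0)"
    using assms by (auto simp: kcycles_def)
  then have "finite (ksupp z)" by (auto simp: kchain_def)
  then have "kbd p (\<lambda>\<sigma>. a * z \<sigma>) = (\<lambda>_. 0)"
    using kbd_scale c(2) by (metis mult_zero_right)
  then show ?thesis using kchain_scale[OF c(1)] by (simp add: kcycles_def)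
qed

lemma kchain_mono: "X \<subseteq> Y \<Longrightarrow> kchain p X c \<Longrightarrow> kchain p Y c"
  unfolding kchain_def by (auto simp: singular_simplex_subtopology)

lemma kcycles_mono: "X \<subseteq> Y \<Longrightarrow> kcycles p X \<subseteq> kcycles p Y"
  unfolding kcycles_def using kchain_mono by blast

lemma kboundaries_mono: "X \<subseteq> Y \<Longrightarrow> kboundaries p X \<subseteq> kboundaries p Y"
  unfolding kboundaries_def using kchain_mono by blast

lemma G1:
  assumes "finite A" "finite S" "m ` A \<subseteq> S" "finite K"
  shows "(\<Sum>\<sigma>\<in>S. \<Sum>k\<in>K. if Q \<sigma> k then t k * (\<Sum>f\<in>A. if m f = \<sigma> then c f else 0) else 0)
       = (\<Sum>f\<in>A. \<Sum>k\<in>K. if Q (m f) k then t k * c f else (0::'k::field))"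
proof -
  have "(\<Sum>\<sigma>\<in>S. \<Sum>k\<in>K. if Q \<sigma> k then t k * (\<Sum>f\<in>A. if m f = \<sigma> then c f else 0) else 0)
      = (\<Sum>\<sigma>\<in>S. \<Sum>k\<in>K. \<Sum>f\<in>A. if m f = \<sigma> then (if Q \<sigma> k then t k * c f else 0) else 0)"
    by (intro sum.cong refl) (auto simp: sum_distrib_left cong: if_cong intro!: sum.cong)
  also have "\<dots> = (\<Sum>f\<in>A. \<Sum>k\<in>K. \<Sum>\<sigma>\<in>S. if m f = \<sigma> then (if Q \<sigma> k then t k * c f else 0) else 0)"
    apply (rule trans)
     apply (rule sum.cong[OF refl])
     apply (rule sum.swap)
    apply (rule trans[OF sum.swap])
    apply (rule sum.cong[OF refl])
    apply (rule sum.swap)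
    done
  also have "\<dots> = (\<Sum>f\<in>A. \<Sum>k\<in>K. if Q (m f) k then t k * c f else 0)"
    using assms by (intro sum.cong refl) (auto simp: sum.delta')
  finally show ?thesis .
qed

lemma G2:
  assumes "finite A" "finite T" "\<And>f k. f \<in> A \<Longrightarrow> k \<in> K \<Longrightarrow> fc f k \<in> T" "finite K"
  shows "(\<Sum>\<rho>\<in>T. if M \<rho> = \<tau> then (\<Sum>f\<in>A. \<Sum>k\<in>K. if fc f k = \<rho> then t k * c f else 0) else 0)
       = (\<Sum>f\<in>A. \<Sum>k\<in>K. if M (fc f k) = \<tau> then t k * c f else (0::'k::field))"
proof -
  have "(\<Sum>\<rho>\<in>T. if M \<rho> = \<tau> then (\<Sum>f\<in>A. \<Sum>k\<in>K. if fc f k = \<rho> then t k * c f else 0) else 0)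
      = (\<Sum>\<rho>\<in>T. \<Sum>f\<in>A. \<Sum>k\<in>K. if fc f k = \<rho> then (if M \<rho> = \<tau> then t k * c f else 0) else 0)"
    by (intro sum.cong refl) (auto cong: if_cong intro!: sum.neutral)
  also have "\<dots> = (\<Sum>f\<in>A. \<Sum>k\<in>K. \<Sum>\<rho>\<in>T. if fc f k = \<rho> then (if M \<rho> = \<tau> then t k * c f else 0) else 0)"
    apply (rule trans[OF sum.swap])
    apply (rule sum.cong[OF refl])
    apply (rule sum.swap)
    done
  also have "\<dots> = (\<Sum>f\<in>A. \<Sum>k\<in>K. if M (fc f k) = \<tau> then t k * c f else 0)"
    using assms by (intro sum.cong refl) (auto simp: sum.delta')
  finally show ?thesis .
qed

lemma face_map:
  assumes "k \<le> Suc q"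
  shows "singular_face (Suc q) k (simplex_map (Suc q) g f) = simplex_map q g (singular_face (Suc q) k f)"
  using singular_face_simplex_map[of "Suc q" k g f] assms
  by (auto simp: simplex_map_def singular_face_def fun_eq_iff restrict_def)

lemma ksupp_kpush: "ksupp (kpush p g (c::('a,'k::field) kchain)) \<subseteq> simplex_map p g ` ksupp c"
proof
  fix \<sigma> assume s: "\<sigma> \<in> ksupp (kpush p g c)"
  show "\<sigma> \<in> simplex_map p g ` ksupp c"
  proof (rule ccontr)
    assume n: "\<sigma> \<notin> simplex_map p g ` ksupp c"
    have "kpush p g c \<sigma> = 0" unfolding kpush_def
    proof (rule sum.neutral, rule ballI)
      fix f assume "f \<in> ksupp c"
      then have "simplex_map p g f \<noteq> \<sigma>" using n by blast
      then show "(if simplex_map p g f = \<sigma> then c f else 0) = 0" by simp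
    qed
    then show False using s by (simp add: ksupp_def)
  qed
qed

lemma face_in_T_aux: "f \<in> A \<Longrightarrow> k \<le> p \<Longrightarrow> singular_face p k f \<in> (\<lambda>(f,k). singular_face p k f) ` (A \<times> {..p})"
  by (rule image_eqI[where x="(f,k)"]) auto

lemma ksupp_kbd: "ksupp (kbd p (c::('a,'k::field) kchain)) \<subseteq> (\<lambda>(f,k). singular_face p k f) ` (ksupp c \<times> {..p})"
proof
  fix \<rho> assume r: "\<rho> \<in> ksupp (kbd p c)"
  show "\<rho> \<in> (\<lambda>(f,k). singular_face p k f) ` (ksupp c \<times> {..p})"
  proof (rule ccontr)
    assume n: "\<rho> \<notin> (\<lambda>(f,k). singular_face p k f) ` (ksupp c \<times> {..p})"
    have "kbd p c \<rho> = 0"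
    proof (cases "p = 0")
      case True then show ?thesis by (simp add: kbd_def)
    next
      case False
      have "(\<Sum>f \<in> ksupp c. \<Sum>k\<le>p. if singular_face p k f = \<rho> then (-1)^k * c f else 0) = 0"
      proof (rule sum.neutral, rule ballI, rule sum.neutral, rule ballI)
        fix f k assume "f \<in> ksupp c" "k \<in> {..p}"
        then have "singular_face p k f \<noteq> \<rho>" using n by (metis atMost_iff face_in_T_aux)
        then show "(if singular_face p k f = \<rho> then (-1)^k * c f else 0) = 0" by simp
      qed
      then show ?thesis using False by (simp add: kbd_def)
    qed
    then show False using r by (simp add: ksupp_def)
  qed
qed

lemmas face_in_T = face_in_T_aux

lemma kpush_kbd:
  assumes fin: "finite (ksupp (c::('a,'k::field) kchain))"
  shows "kbd (Suc q) (kpush (Suc q) g c) = kpush q g (kbd (Suc q) c)"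
proof
  fix \<tau>
  let ?p = "Suc q"
  let ?S = "simplex_map ?p g ` ksupp c"
  let ?T = "(\<lambda>(f,k). singular_face ?p k f) ` (ksupp c \<times> {..?p})"
  have fS: "finite ?S" using fin by simp
  have fT: "finite ?T" using fin by simp
  have "kbd ?p (kpush ?p g c) \<tau> = (\<Sum>\<sigma>\<in>?S. \<Sum>k\<le>?p. if singular_face ?p k \<sigma> = \<tau> then (-1)^k * kpush ?p g c \<sigma> else 0)"
    by (rule kbd_sum[OF fS ksupp_kpush]) simp
  also have "\<dots> = (\<Sum>\<sigma>\<in>?S. \<Sum>k\<le>?p. if singular_face ?p k \<sigma> = \<tau> then (-1)^k * (\<Sum>f\<in>ksupp c. if simplex_map ?p g f = \<sigma> then c f else 0) else 0)"
    by (simp only: kpush_def)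
  also have "\<dots> = (\<Sum>f\<in>ksupp c. \<Sum>k\<le>?p. if singular_face ?p k (simplex_map ?p g f) = \<tau> then (-1)^k * c f else 0)"
    by (rule G1[where Q="\<lambda>\<sigma> k. singular_face ?p k \<sigma> = \<tau>" and t="\<lambda>k. (-1)^k" and m="simplex_map ?p g"]) (use fin in auto)
  also have "\<dots> = (\<Sum>f\<in>ksupp c. \<Sum>k\<le>?p. if simplex_map q g (singular_face ?p k f) = \<tau> then (-1)^k * c f else 0)"
    by (intro sum.cong refl) (simp add: face_map)
  also have "\<dots> = (\<Sum>\<rho>\<in>?T. if simplex_map q g \<rho> = \<tau> then (\<Sum>f\<in>ksupp c. \<Sum>k\<le>?p. if singular_face ?p k f = \<rho> then (-1)^k * c f else 0) else 0)"
    by (rule G2[where M="simplex_map q g" and fc="\<lambda>f k. singular_face ?p k f" and t="\<lambda>k. (-1)^k", symmetric, OF fin fT face_in_T]) simp_all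
  also have "\<dots> = (\<Sum>\<rho>\<in>?T. if simplex_map q g \<rho> = \<tau> then kbd ?p c \<rho> else 0)"
    by (simp only: kbd_def nat.simps if_False)
  also have "\<dots> = kpush q g (kbd ?p c) \<tau>"
    by (rule kpush_sum[symmetric, OF fT ksupp_kbd])
  finally show "kbd ?p (kpush ?p g c) \<tau> = kpush q g (kbd ?p c) \<tau>" .
qed

lemma kpush_chain:
  assumes "kchain p X (c::('a::topological_space,'k::field) kchain)"
    and "continuous_map (top_of_set X) (top_of_set (Y::'b::topological_space set)) g"
  shows "kchain p Y (kpush p g c)"
proof -
  have c: "finite (ksupp c)" "\<And>f. f \<in> ksupp c \<Longrightarrow> singular_simplex p (top_of_set X) f"
    using assms(1) by (auto simp: kchain_def)
  have "finite (ksupp (kpush p g c))"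
    by (rule finite_subset[OF ksupp_kpush]) (use c in simp)
  moreover have "singular_simplex p (top_of_set Y) \<sigma>" if s: "\<sigma> \<in> ksupp (kpush p g c)" for \<sigma>
  proof -
    obtain f where "f \<in> ksupp c" "\<sigma> = simplex_map p g f" using s ksupp_kpush[of p g c] by blast
    then show ?thesis using singular_simplex_simplex_map[OF c(2) assms(2)] by simp
  qed
  ultimately show ?thesis by (simp add: kchain_def)
qed

lemma kpush_cycle:
  assumes "c \<in> kcycles p X"
    and "continuous_map (top_of_set X) (top_of_set (Y::'b::topological_space set)) g"
  shows "kpush p g (c::('a::topological_space,'k::field) kchain) \<in> kcycles p Y"
proof -
  have c: "kchain p X c" "kbd p c = (\<lambda>_. 0)" using assms(1) by (auto simp: kcycles_def)
  have "kbd p (kpush p g c) = (\<lambda>_. 0)"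
  proof (cases p)
    case 0 then show ?thesis by (simp add: kbd_def)
  next
    case (Suc q)
    have "kbd p (kpush p g c) = kpush q g (kbd p c)"
      using kpush_kbd[of c q g] c(1) Suc by (simp add: kchain_def)
    also have "\<dots> = (\<lambda>_. 0)" by (simp add: c(2) kpush_def ksupp_def)
    finally show ?thesis .
  qed
  then show ?thesis using kpush_chain[OF c(1) assms(2)] by (simp add: kcycles_def)
qed

definition dlvl :: "nat \<Rightarrow> 'a::topological_space set \<Rightarrow> ('a \<times> 'b::topological_space) set \<Rightarrow> 'b set
     \<Rightarrow> (nat \<times> nat \<Rightarrow> nat)
     \<Rightarrow> (('a,'k::field) kchain \<Rightarrow> (nat \<times> nat \<times> nat \<Rightarrow> 'k))
     \<Rightarrow> (('a \<times> 'b,'k) kchain \<Rightarrow> (nat \<times> nat \<times> nat \<Rightarrow> 'k))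
     \<Rightarrow> (('b,'k) kchain \<Rightarrow> (nat \<times> nat \<times> nat \<Rightarrow> 'k)) \<Rightarrow> bool" where
  "dlvl p X1 X2 X3 m e1 e2 e3 \<longleftrightarrow> is_decomp p X1 X2 X3 m e1 e2 e3 \<and>
     (\<forall>z\<in>kcycles p X2. kpush p fst (z::('a\<times>'b,'k) kchain) \<in> kcycles p X1 \<and> kpush p snd z \<in> kcycles p X3)"

lemma hi_mem: "hom_iso p X m i e \<Longrightarrow> z \<in> kcycles p X \<Longrightarrow> e z \<in> model_space m i"
  by (simp add: hom_iso_def)
lemma hi_surj: "hom_iso p X m i e \<Longrightarrow> v \<in> model_space m i \<Longrightarrow> \<exists>z. z \<in> kcycles p X \<and> e z = v"
  by (auto simp add: hom_iso_def)
lemma hi_add: "hom_iso p X m i e \<Longrightarrow> z \<in> kcycles p X \<Longrightarrow> w \<in> kcycles p X \<Longrightarrow>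
    e (\<lambda>\<sigma>. z \<sigma> + w \<sigma>) = (\<lambda>x. e z x + e w x)"
  by (simp add: hom_iso_def)
lemma hi_scale: "hom_iso p X m i e \<Longrightarrow> z \<in> kcycles p X \<Longrightarrow> e (\<lambda>\<sigma>. c * z \<sigma>) = (\<lambda>x. c * e z x)"
  by (simp add: hom_iso_def)
lemma hi_zero: "hom_iso p X m i e \<Longrightarrow> z \<in> kcycles p X \<Longrightarrow> e z = (\<lambda>_. 0) \<longleftrightarrow> z \<in> kboundaries p X"
  by (simp add: hom_iso_def)

lemma K0:
  fixes e1 :: "('a::topological_space,'k::field) kchain \<Rightarrow> (nat \<times> nat \<times> nat \<Rightarrow> 'k)"
    and e3 :: "('b::topological_space,'k) kchain \<Rightarrow> (nat \<times> nat \<times> nat \<Rightarrow> 'k)"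
  assumes A: "dlvl p X1 X2 X3 m e1 e2 e3" and B: "dlvl p Y1 Y2 Y3 n f1 f2 f3"
    and sub: "X1 \<subseteq> Y1" "X2 \<subseteq> Y2" "X3 \<subseteq> Y3"
    and w: "w \<in> kcycles p X2" and z13: "\<forall>j<m(1,3). e2 w (1,3,j) = 0"
  shows "f2 w (1,3,j) = 0"
proof -
  have hA1: "hom_iso p X1 m 1 e1" and hA2: "hom_iso p X2 m 2 e2" and hA3: "hom_iso p X3 m 3 e3"
    and cA21: "\<forall>z\<in>kcycles p X2. e1 (kpush p fst z) = model_21 (e2 z)"
    and cA23: "\<forall>z\<in>kcycles p X2. e3 (kpush p snd z) = model_23 (e2 z)"
    and pA: "\<forall>z\<in>kcycles p X2. kpush p fst (z::('a\<times>'b,'k) kchain) \<in> kcycles p X1 \<and> kpush p snd z \<in> kcycles p X3"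
    using A by (auto simp: dlvl_def is_decomp_def)
  have hB1: "hom_iso p Y1 n 1 f1" and hB2: "hom_iso p Y2 n 2 f2" and hB3: "hom_iso p Y3 n 3 f3"
    and cB21: "\<forall>z\<in>kcycles p Y2. f1 (kpush p fst z) = model_21 (f2 z)"
    and cB23: "\<forall>z\<in>kcycles p Y2. f3 (kpush p snd z) = model_23 (f2 z)"
    using B by (auto simp: dlvl_def is_decomp_def)
  define v where "v = e2 w"
  have vm: "v \<in> model_space m 2" using hi_mem[OF hA2 w] by (simp add: v_def)
  define a where "a = (\<lambda>(b::nat,d::nat,j::nat). if b = 2 then v (b,d,j) else 0)"
  define bb where "bb = (\<lambda>(b::nat,d::nat,j::nat). if b = 2 then 0 else v (b,d,j))"
  have am: "a \<in> model_space m 2" using vm by (auto simp: model_space_def a_def)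
  have bm: "bb \<in> model_space m 2" using vm by (auto simp: model_space_def bb_def)
  obtain za where za: "za \<in> kcycles p X2" "e2 za = a" using hi_surj[OF hA2 am] by blast
  obtain zb where zb: "zb \<in> kcycles p X2" "e2 zb = bb" using hi_surj[OF hA2 bm] by blast
  have a21: "model_21 a = (\<lambda>_. 0)"
    by (rule ext) (auto simp: model_21_def a_def split: prod.splits)
  have b23: "model_23 bb = (\<lambda>_. 0)"
  proof (rule ext)
    fix x :: "nat \<times> nat \<times> nat"
    obtain b d i where x: "x = (b,d,i)" by (cases x) auto
    show "model_23 bb x = 0"
    proof (cases "d = 3 \<and> b \<noteq> 2 \<and> v (b,d,i) \<noteq> 0")
      case True
      then have "1 \<le> b" "b \<le> 2" "i < m (b,d)" using vm by (auto simp: model_space_def)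
      then have "b = 1" using True by auto
      then show ?thesis using True z13 \<open>i < m (b,d)\<close> by (auto simp: v_def)
    next
      case False
      then show ?thesis by (auto simp: model_23_def bb_def x)
    qed
  qed
  define zab where "zab = (\<lambda>\<sigma>. za \<sigma> + zb \<sigma>)"
  define w' where "w' = (\<lambda>\<sigma>. w \<sigma> + (-1) * zab \<sigma>)"
  have zabc: "zab \<in> kcycles p X2" unfolding zab_def by (rule kcycles_add[OF za(1) zb(1)])
  have w'c: "w' \<in> kcycles p X2" unfolding w'_def by (rule kcycles_add[OF w kcycles_scale[OF zabc]])
  have wsum: "w = (\<lambda>\<sigma>. w' \<sigma> + zab \<sigma>)" by (simp add: w'_def fun_eq_iff)
  have e2w: "e2 w = (\<lambda>x. e2 w' x + e2 zab x)" using hi_add[OF hA2 w'c zabc] wsum by simp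
  have e2zab: "e2 zab = (\<lambda>x. a x + bb x)" using hi_add[OF hA2 za(1) zb(1)] za(2) zb(2) by (simp add: zab_def)
  have vab: "v = (\<lambda>x. a x + bb x)" by (auto simp: a_def bb_def fun_eq_iff split: prod.splits)
  have "e2 w' = (\<lambda>_. 0)"
  proof (rule ext)
    fix x
    have "e2 w x = e2 w' x + a x + bb x" using e2w e2zab by (simp add: add.assoc)
    moreover have "e2 w x = a x + bb x" using vab by (simp add: v_def)
    ultimately show "e2 w' x = 0" by (simp add: algebra_simps)
  qed
  then have "w' \<in> kboundaries p X2" using hi_zero[OF hA2 w'c] by simp
  then have "w' \<in> kboundaries p Y2" using kboundaries_mono[OF sub(2)] by blast
  moreover have w'cY: "w' \<in> kcycles p Y2" using w'c kcycles_mono[OF sub(2)] by blast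
  ultimately have f2w': "f2 w' = (\<lambda>_. 0)" using hi_zero[OF hB2] by blast
  have zacY: "za \<in> kcycles p Y2" using za(1) kcycles_mono[OF sub(2)] by blast
  have zbcY: "zb \<in> kcycles p Y2" using zb(1) kcycles_mono[OF sub(2)] by blast
  have fa: "f2 za (1,3,j) = 0"
  proof -
    have kc: "kpush p fst za \<in> kcycles p X1" using pA za(1) by blast
    have "e1 (kpush p fst za) = (\<lambda>_. 0)" using cA21 za a21 by simp
    then have "kpush p fst za \<in> kboundaries p X1" using hi_zero[OF hA1 kc] by simp
    then have "kpush p fst za \<in> kboundaries p Y1" using kboundaries_mono[OF sub(1)] by blast
    moreover have "kpush p fst za \<in> kcycles p Y1" using kc kcycles_mono[OF sub(1)] by blast
    ultimately have "f1 (kpush p fst za) = (\<lambda>_. 0)" using hi_zero[OF hB1] by blast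
    then have "model_21 (f2 za) = (\<lambda>_. 0)" using cB21 zacY by simp
    then have "model_21 (f2 za) (1,3,j) = 0" by simp
    then show ?thesis by (simp add: model_21_def)
  qed
  have fb: "f2 zb (1,3,j) = 0"
  proof -
    have kc: "kpush p snd zb \<in> kcycles p X3" using pA zb(1) by blast
    have "e3 (kpush p snd zb) = (\<lambda>_. 0)" using cA23 zb b23 by simp
    then have "kpush p snd zb \<in> kboundaries p X3" using hi_zero[OF hA3 kc] by simp
    then have "kpush p snd zb \<in> kboundaries p Y3" using kboundaries_mono[OF sub(3)] by blast
    moreover have "kpush p snd zb \<in> kcycles p Y3" using kc kcycles_mono[OF sub(3)] by blast
    ultimately have "f3 (kpush p snd zb) = (\<lambda>_. 0)" using hi_zero[OF hB3] by blast
    then have "model_23 (f2 zb) = (\<lambda>_. 0)" using cB23 zbcY by simp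
    then have "model_23 (f2 zb) (1,3,j) = 0" by simp
    then show ?thesis by (simp add: model_23_def)
  qed
  have zabcY: "zab \<in> kcycles p Y2" using zabc kcycles_mono[OF sub(2)] by blast
  have "f2 w = (\<lambda>x. f2 w' x + f2 zab x)" using hi_add[OF hB2 w'cY zabcY] wsum by simp
  moreover have "f2 zab = (\<lambda>x. f2 za x + f2 zb x)" using hi_add[OF hB2 zacY zbcY] by (simp add: zab_def)
  ultimately show ?thesis using f2w' fa fb by simp
qed

lemma K:
  fixes e1 :: "('a::topological_space,'k::field) kchain \<Rightarrow> (nat \<times> nat \<times> nat \<Rightarrow> 'k)"
    and e3 :: "('b::topological_space,'k) kchain \<Rightarrow> (nat \<times> nat \<times> nat \<Rightarrow> 'k)"
  assumes A: "dlvl p X1 X2 X3 m e1 e2 e3" and B: "dlvl p Y1 Y2 Y3 n f1 f2 f3"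
    and sub: "X1 \<subseteq> Y1" "X2 \<subseteq> Y2" "X3 \<subseteq> Y3"
    and z: "z \<in> kcycles p X2" and z': "z' \<in> kcycles p X2"
    and eq: "extract13 m (e2 z) = extract13 m (e2 z')"
  shows "extract13 n (f2 z) = extract13 n (f2 z')"
proof -
  have hA2: "hom_iso p X2 m 2 e2" using A by (simp add: dlvl_def is_decomp_def)
  have hB2: "hom_iso p Y2 n 2 f2" using B by (simp add: dlvl_def is_decomp_def)
  define w where "w = (\<lambda>\<sigma>. z \<sigma> + (-1) * z' \<sigma>)"
  have wc: "w \<in> kcycles p X2" unfolding w_def by (rule kcycles_add[OF z kcycles_scale[OF z']])
  have zs: "z = (\<lambda>\<sigma>. w \<sigma> + z' \<sigma>)" by (simp add: w_def fun_eq_iff)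
  have e2z: "e2 z = (\<lambda>x. e2 w x + e2 z' x)" using hi_add[OF hA2 wc z'] zs by simp
  have "\<forall>j<m(1,3). e2 w (1,3,j) = 0"
  proof (intro allI impI)
    fix j assume j: "j < m(1,3)"
    have "extract13 m (e2 z) j = extract13 m (e2 z') j" using eq by simp
    then have "e2 z (1,3,j) = e2 z' (1,3,j)" using j by (simp add: extract13_def)
    then show "e2 w (1,3,j) = 0" using e2z by (metis add_cancel_left_left)
  qed
  then have fw: "\<And>j. f2 w (1,3,j) = 0" using K0[OF A B sub wc] by blast
  have wcY: "w \<in> kcycles p Y2" using wc kcycles_mono[OF sub(2)] by blast
  have z'cY: "z' \<in> kcycles p Y2" using z' kcycles_mono[OF sub(2)] by blast
  have "f2 z = (\<lambda>x. f2 w x + f2 z' x)" using hi_add[OF hB2 wcY z'cY] zs by simp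
  then show ?thesis using fw by (simp add: extract13_def fun_eq_iff)
qed

definition zeta :: "nat \<Rightarrow> 'a::topological_space set \<Rightarrow> (nat \<times> nat \<Rightarrow> nat)
   \<Rightarrow> (('a,'k::field) kchain \<Rightarrow> (nat \<times> nat \<times> nat \<Rightarrow> 'k)) \<Rightarrow> (nat \<Rightarrow> 'k) \<Rightarrow> ('a,'k) kchain" where
  "zeta p X2 m e2 x = (SOME z. z \<in> kcycles p X2 \<and> e2 z = embed13 m x)"

definition phi :: "nat \<Rightarrow> 'a::topological_space set \<Rightarrow> (nat \<times> nat \<Rightarrow> nat)
   \<Rightarrow> (('a,'k::field) kchain \<Rightarrow> (nat \<times> nat \<times> nat \<Rightarrow> 'k))
   \<Rightarrow> (nat \<times> nat \<Rightarrow> nat) \<Rightarrow> (('a,'k) kchain \<Rightarrow> (nat \<times> nat \<times> nat \<Rightarrow> 'k)) \<Rightarrow> (nat \<Rightarrow> 'k) \<Rightarrow> (nat \<Rightarrow> 'k)" where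
  "phi p X2 m e2 n f2 x = extract13 n (f2 (zeta p X2 m e2 x))"

lemma embed_ms: "embed13 m x \<in> model_space m 2"
  by (auto simp: embed13_def model_space_def split: if_splits)

lemma zeta:
  assumes "hom_iso p X2 m 2 e2"
  shows "zeta p X2 m e2 x \<in> kcycles p X2 \<and> e2 (zeta p X2 m e2 x) = embed13 m x"
proof -
  have "\<exists>z. z \<in> kcycles p X2 \<and> e2 z = embed13 m x" by (rule hi_surj[OF assms embed_ms])
  then show ?thesis unfolding zeta_def by (rule someI_ex)
qed

lemma extract_embed: "x \<in> kvec (m(1,3)) \<Longrightarrow> extract13 m (embed13 m x) = x"
  by (auto simp: extract13_def embed13_def kvec_def fun_eq_iff)

lemma extract_kvec: "extract13 m v \<in> kvec (m(1,3))"
  by (auto simp: extract13_def kvec_def)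

lemma extract_add: "extract13 m (\<lambda>v. a v + b v) = (\<lambda>j. extract13 m a j + extract13 m b j :: 'k::field)"
  by (simp add: extract13_def fun_eq_iff)

lemma extract_scale: "extract13 m (\<lambda>v. c * a v) = (\<lambda>j. c * extract13 m a j :: 'k::field)"
  by (simp add: extract13_def fun_eq_iff)

lemma phi_kvec: "phi p X2 m e2 n f2 x \<in> kvec (n(1,3))"
  unfolding phi_def by (rule extract_kvec)

lemma kvec_add: "(x::nat \<Rightarrow> 'k::field) \<in> kvec k \<Longrightarrow> y \<in> kvec k \<Longrightarrow> (\<lambda>j. x j + y j) \<in> kvec k"
  by (simp add: kvec_def)

lemma kvec_scale: "(x::nat \<Rightarrow> 'k::field) \<in> kvec k \<Longrightarrow> (\<lambda>j. c * x j) \<in> kvec k"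
  by (simp add: kvec_def)

lemma phi_add:
  fixes e1 :: "('a::topological_space,'k::field) kchain \<Rightarrow> (nat \<times> nat \<times> nat \<Rightarrow> 'k)"
    and e3 :: "('b::topological_space,'k) kchain \<Rightarrow> (nat \<times> nat \<times> nat \<Rightarrow> 'k)"
  assumes A: "dlvl p X1 X2 X3 m e1 e2 e3" and B: "dlvl p Y1 Y2 Y3 n f1 f2 f3"
    and sub: "X1 \<subseteq> Y1" "X2 \<subseteq> Y2" "X3 \<subseteq> Y3"
    and x: "x \<in> kvec (m(1,3))" and y: "y \<in> kvec (m(1,3))"
  shows "phi p X2 m e2 n f2 (\<lambda>j. x j + y j) = (\<lambda>j. phi p X2 m e2 n f2 x j + phi p X2 m e2 n f2 y j)"
proof -
  have hA2: "hom_iso p X2 m 2 e2" using A by (simp add: dlvl_def is_decomp_def)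
  have hB2: "hom_iso p Y2 n 2 f2" using B by (simp add: dlvl_def is_decomp_def)
  define z1 where "z1 = zeta p X2 m e2 x"
  define z2 where "z2 = zeta p X2 m e2 y"
  define z3 where "z3 = zeta p X2 m e2 (\<lambda>j. x j + y j)"
  have z1: "z1 \<in> kcycles p X2" "e2 z1 = embed13 m x" using zeta[OF hA2] by (auto simp: z1_def)
  have z2: "z2 \<in> kcycles p X2" "e2 z2 = embed13 m y" using zeta[OF hA2] by (auto simp: z2_def)
  have z3: "z3 \<in> kcycles p X2" "e2 z3 = embed13 m (\<lambda>j. x j + y j)" using zeta[OF hA2] by (auto simp: z3_def)
  define z12 where "z12 = (\<lambda>\<sigma>. z1 \<sigma> + z2 \<sigma>)"
  have z12: "z12 \<in> kcycles p X2" unfolding z12_def by (rule kcycles_add[OF z1(1) z2(1)])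
  have "extract13 m (e2 z12) = (\<lambda>j. x j + y j)"
    unfolding z12_def hi_add[OF hA2 z1(1) z2(1)] extract_add z1(2) z2(2)
      extract_embed[where x=x and m=m, OF x] extract_embed[where x=y and m=m, OF y] ..
  moreover have "extract13 m (e2 z3) = (\<lambda>j. x j + y j)"
    using z3(2) extract_embed[where m=m, OF kvec_add[OF x y]] by simp
  ultimately have "extract13 n (f2 z3) = extract13 n (f2 z12)"
    using K[OF A B sub z3(1) z12] by simp
  moreover have "f2 z12 = (\<lambda>v. f2 z1 v + f2 z2 v)"
    using hi_add[OF hB2, of z1 z2] z1(1) z2(1) kcycles_mono[OF sub(2)] by (auto simp: z12_def)
  ultimately show ?thesis
    by (simp add: phi_def z1_def[symmetric] z2_def[symmetric] z3_def[symmetric] extract13_def fun_eq_iff)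
qed

lemma phi_scale:
  fixes e1 :: "('a::topological_space,'k::field) kchain \<Rightarrow> (nat \<times> nat \<times> nat \<Rightarrow> 'k)"
    and e3 :: "('b::topological_space,'k) kchain \<Rightarrow> (nat \<times> nat \<times> nat \<Rightarrow> 'k)"
  assumes A: "dlvl p X1 X2 X3 m e1 e2 e3" and B: "dlvl p Y1 Y2 Y3 n f1 f2 f3"
    and sub: "X1 \<subseteq> Y1" "X2 \<subseteq> Y2" "X3 \<subseteq> Y3"
    and x: "x \<in> kvec (m(1,3))"
  shows "phi p X2 m e2 n f2 (\<lambda>j. c * x j) = (\<lambda>j. c * phi p X2 m e2 n f2 x j)"
proof -
  have hA2: "hom_iso p X2 m 2 e2" using A by (simp add: dlvl_def is_decomp_def)
  have hB2: "hom_iso p Y2 n 2 f2" using B by (simp add: dlvl_def is_decomp_def)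
  define z1 where "z1 = zeta p X2 m e2 x"
  define z3 where "z3 = zeta p X2 m e2 (\<lambda>j. c * x j)"
  have z1: "z1 \<in> kcycles p X2" "e2 z1 = embed13 m x" using zeta[OF hA2] by (auto simp: z1_def)
  have z3: "z3 \<in> kcycles p X2" "e2 z3 = embed13 m (\<lambda>j. c * x j)" using zeta[OF hA2] by (auto simp: z3_def)
  define zc where "zc = (\<lambda>\<sigma>. c * z1 \<sigma>)"
  have zc: "zc \<in> kcycles p X2" unfolding zc_def by (rule kcycles_scale[OF z1(1)])
  have "extract13 m (e2 zc) = (\<lambda>j. c * x j)"
    unfolding zc_def hi_scale[OF hA2 z1(1)] extract_scale z1(2) extract_embed[where x=x and m=m, OF x] ..
  moreover have "extract13 m (e2 z3) = (\<lambda>j. c * x j)"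
    using z3(2) extract_embed[where m=m, OF kvec_scale[OF x]] by simp
  ultimately have "extract13 n (f2 z3) = extract13 n (f2 zc)"
    using K[OF A B sub z3(1) zc] by simp
  moreover have "f2 zc = (\<lambda>v. c * f2 z1 v)"
    using hi_scale[OF hB2, of z1 c] z1(1) kcycles_mono[OF sub(2)] by (auto simp: zc_def)
  ultimately show ?thesis
    by (simp add: phi_def z1_def[symmetric] z3_def[symmetric] extract13_def fun_eq_iff)
qed

lemma phi_comp:
  fixes e1 :: "('a::topological_space,'k::field) kchain \<Rightarrow> (nat \<times> nat \<times> nat \<Rightarrow> 'k)"
    and e3 :: "('b::topological_space,'k) kchain \<Rightarrow> (nat \<times> nat \<times> nat \<Rightarrow> 'k)"
  assumes A: "dlvl p X1 X2 X3 m e1 e2 e3" and B: "dlvl p Y1 Y2 Y3 n f1 f2 f3"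
    and C: "dlvl p Z1 Z2 Z3 l g1 g2 g3"
    and sub: "X2 \<subseteq> Y2" and sub': "Y1 \<subseteq> Z1" "Y2 \<subseteq> Z2" "Y3 \<subseteq> Z3"
  shows "phi p Y2 n f2 l g2 (phi p X2 m e2 n f2 x) = phi p X2 m e2 l g2 x"
proof -
  have hA2: "hom_iso p X2 m 2 e2" using A by (simp add: dlvl_def is_decomp_def)
  have hB2: "hom_iso p Y2 n 2 f2" using B by (simp add: dlvl_def is_decomp_def)
  define z where "z = zeta p X2 m e2 x"
  have zc: "z \<in> kcycles p Y2" using zeta[OF hA2] kcycles_mono[OF sub] by (auto simp: z_def)
  define y where "y = extract13 n (f2 z)"
  have y: "y \<in> kvec (n(1,3))" unfolding y_def by (rule extract_kvec)
  define z' where "z' = zeta p Y2 n f2 y"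
  have z': "z' \<in> kcycles p Y2" "f2 z' = embed13 n y" using zeta[OF hB2] by (auto simp: z'_def)
  have "extract13 n (f2 z') = extract13 n (f2 z)" using z'(2) extract_embed[where x=y and m=n, OF y] by (simp add: y_def)
  then have "extract13 l (g2 z') = extract13 l (g2 z)" using K[OF B C sub' z'(1) zc] by simp
  then show ?thesis by (simp add: phi_def z_def[symmetric] y_def[symmetric] z'_def[symmetric])
qed

lemma phi_id:
  assumes h: "hom_iso p X2 m 2 e2" and x: "x \<in> kvec (m(1,3))"
  shows "phi p X2 m e2 m e2 x = x"
  using zeta[OF h, of x] extract_embed[where x=x and m=m, OF x] by (simp add: phi_def)

lemma pm_tr_pmod: "pm_tr (pmod_of p G m e2) s t x =
   (if 0 \<le> s \<and> s \<le> t then phi p (G s) (m s) (e2 s) (m t) (e2 t) x else (\<lambda>_. 0))"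
  by (simp add: pm_tr_def pmod_of_def phi_def zeta_def)

lemma pm_dim_pmod: "pm_dim (pmod_of p G m e2) t = (if t < 0 then 0 else m t (1,3))"
  by (simp add: pm_dim_def pmod_of_def)

lemma phi_kvec': "phi p X2 m e2 n f2 x \<in> kvec (n(Suc 0,3))"
  using phi_kvec[of p X2 m e2 n f2 x] by simp

lemma kvec_zero: "(\<lambda>_. 0) \<in> kvec k"
  by (simp add: kvec_def)

lemma phi_zero:
  fixes e1 :: "('a::topological_space,'k::field) kchain \<Rightarrow> (nat \<times> nat \<times> nat \<Rightarrow> 'k)"
    and e3 :: "('b::topological_space,'k) kchain \<Rightarrow> (nat \<times> nat \<times> nat \<Rightarrow> 'k)"
  assumes A: "dlvl p X1 X2 X3 m e1 e2 e3" and B: "dlvl p Y1 Y2 Y3 n f1 f2 f3"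
    and sub: "X1 \<subseteq> Y1" "X2 \<subseteq> Y2" "X3 \<subseteq> Y3"
  shows "phi p X2 m e2 n f2 (\<lambda>_. 0) = (\<lambda>_. 0)"
  using phi_scale[OF A B sub kvec_zero, of 0] by simp

definition fam :: "nat \<Rightarrow> (real \<Rightarrow> 'a::topological_space set) \<Rightarrow> (real \<Rightarrow> ('a \<times> 'b::topological_space) set) \<Rightarrow> (real \<Rightarrow> 'b set)
     \<Rightarrow> (real \<Rightarrow> nat \<times> nat \<Rightarrow> nat)
     \<Rightarrow> (real \<Rightarrow> ('a,'k::field) kchain \<Rightarrow> (nat \<times> nat \<times> nat \<Rightarrow> 'k))
     \<Rightarrow> (real \<Rightarrow> ('a \<times> 'b,'k) kchain \<Rightarrow> (nat \<times> nat \<times> nat \<Rightarrow> 'k))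
     \<Rightarrow> (real \<Rightarrow> ('b,'k) kchain \<Rightarrow> (nat \<times> nat \<times> nat \<Rightarrow> 'k)) \<Rightarrow> bool" where
  "fam p X1 X2 X3 m e1 e2 e3 \<longleftrightarrow>
     (\<forall>r\<ge>0. dlvl p (X1 r) (X2 r) (X3 r) (m r) (e1 r) (e2 r) (e3 r)) \<and>
     (\<forall>s r. 0 \<le> s \<longrightarrow> s \<le> r \<longrightarrow> X1 s \<subseteq> X1 r \<and> X2 s \<subseteq> X2 r \<and> X3 s \<subseteq> X3 r)"

definition cross :: "(real \<Rightarrow> 'a set) \<Rightarrow> (real \<Rightarrow> 'c set) \<Rightarrow> (real \<Rightarrow> 'b set)
    \<Rightarrow> (real \<Rightarrow> 'a set) \<Rightarrow> (real \<Rightarrow> 'c set) \<Rightarrow> (real \<Rightarrow> 'b set) \<Rightarrow> real \<Rightarrow> bool" where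
  "cross X1 X2 X3 Y1 Y2 Y3 \<delta> \<longleftrightarrow> (\<forall>s\<ge>0. X1 s \<subseteq> Y1 (s+\<delta>) \<and> X2 s \<subseteq> Y2 (s+\<delta>) \<and> X3 s \<subseteq> Y3 (s+\<delta>))"

definition fmap :: "nat \<Rightarrow> (real \<Rightarrow> 'a::topological_space set) \<Rightarrow> (real \<Rightarrow> nat \<times> nat \<Rightarrow> nat)
   \<Rightarrow> (real \<Rightarrow> ('a,'k::field) kchain \<Rightarrow> (nat \<times> nat \<times> nat \<Rightarrow> 'k))
   \<Rightarrow> (real \<Rightarrow> nat \<times> nat \<Rightarrow> nat) \<Rightarrow> (real \<Rightarrow> ('a,'k) kchain \<Rightarrow> (nat \<times> nat \<times> nat \<Rightarrow> 'k)) \<Rightarrow> real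
   \<Rightarrow> real \<Rightarrow> (nat \<Rightarrow> 'k) \<Rightarrow> (nat \<Rightarrow> 'k)" where
  "fmap p X2 m e2 m' e2' \<delta> t x = (if 0 \<le> t then phi p (X2 t) (m t) (e2 t) (m' (t+\<delta>)) (e2' (t+\<delta>)) x else (\<lambda>_. 0))"

lemma pmorph_gen:
  fixes e1 :: "real \<Rightarrow> ('a::topological_space,'k::field) kchain \<Rightarrow> (nat \<times> nat \<times> nat \<Rightarrow> 'k)"
    and e3 :: "real \<Rightarrow> ('b::topological_space,'k) kchain \<Rightarrow> (nat \<times> nat \<times> nat \<Rightarrow> 'k)"
  assumes F: "fam p X1 X2 X3 m e1 e2 e3" and F': "fam p Y1 Y2 Y3 n f1 f2 f3"
    and C: "cross X1 X2 X3 Y1 Y2 Y3 \<delta>" and d: "0 \<le> \<delta>"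
  shows "pmorph \<delta> (pmod_of p X2 m e2) (pmod_of p Y2 n f2) (fmap p X2 m e2 n f2 \<delta>)"
proof -
  have L: "\<And>r. 0 \<le> r \<Longrightarrow> dlvl p (X1 r) (X2 r) (X3 r) (m r) (e1 r) (e2 r) (e3 r)" using F by (simp add: fam_def)
  have L': "\<And>r. 0 \<le> r \<Longrightarrow> dlvl p (Y1 r) (Y2 r) (Y3 r) (n r) (f1 r) (f2 r) (f3 r)" using F' by (simp add: fam_def)
  have M: "\<And>s r. 0 \<le> s \<Longrightarrow> s \<le> r \<Longrightarrow> X1 s \<subseteq> X1 r" "\<And>s r. 0 \<le> s \<Longrightarrow> s \<le> r \<Longrightarrow> X2 s \<subseteq> X2 r"
    "\<And>s r. 0 \<le> s \<Longrightarrow> s \<le> r \<Longrightarrow> X3 s \<subseteq> X3 r" using F by (auto simp: fam_def)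
  have M': "\<And>s r. 0 \<le> s \<Longrightarrow> s \<le> r \<Longrightarrow> Y1 s \<subseteq> Y1 r" "\<And>s r. 0 \<le> s \<Longrightarrow> s \<le> r \<Longrightarrow> Y2 s \<subseteq> Y2 r"
    "\<And>s r. 0 \<le> s \<Longrightarrow> s \<le> r \<Longrightarrow> Y3 s \<subseteq> Y3 r" using F' by (auto simp: fam_def)
  have X: "\<And>s. 0 \<le> s \<Longrightarrow> X1 s \<subseteq> Y1 (s+\<delta>)" "\<And>s. 0 \<le> s \<Longrightarrow> X2 s \<subseteq> Y2 (s+\<delta>)"
    "\<And>s. 0 \<le> s \<Longrightarrow> X3 s \<subseteq> Y3 (s+\<delta>)" using C by (auto simp: cross_def)
  let ?M = "pmod_of p X2 m e2" and ?N = "pmod_of p Y2 n f2" and ?f = "fmap p X2 m e2 n f2 \<delta>"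
  have zeroY: "\<And>s t. pm_tr ?N s t (\<lambda>_. 0) = (\<lambda>_. 0)"
  proof -
    fix s t
    show "pm_tr ?N s t (\<lambda>_. 0) = (\<lambda>_. 0)"
    proof (cases "0 \<le> s \<and> s \<le> t")
      case True
      then show ?thesis unfolding pm_tr_pmod
        using phi_zero[OF L' L' M'(1) M'(2) M'(3), of s t] True by auto
    qed (auto simp: pm_tr_pmod)
  qed
  have zerof: "\<And>t. ?f t (\<lambda>_. 0) = (\<lambda>_. 0)"
    unfolding fmap_def using phi_zero[OF L L' X] d by auto
  have a: "\<forall>t. \<forall>x \<in> kvec (pm_dim ?M t). ?f t x \<in> kvec (pm_dim ?N (t + \<delta>))"
    using d by (auto simp: fmap_def pm_dim_pmod phi_kvec' kvec_zero)
  have b: "\<forall>t. \<forall>x \<in> kvec (pm_dim ?M t). \<forall>y \<in> kvec (pm_dim ?M t).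
         ?f t (\<lambda>j. x j + y j) = (\<lambda>j. ?f t x j + ?f t y j)"
  proof (intro allI ballI)
    fix t and x y :: "nat \<Rightarrow> 'k" assume x: "x \<in> kvec (pm_dim ?M t)" and y: "y \<in> kvec (pm_dim ?M t)"
    show "?f t (\<lambda>j. x j + y j) = (\<lambda>j. ?f t x j + ?f t y j)"
    proof (cases "0 \<le> t")
      case True
      then have "x \<in> kvec (m t (1,3))" "y \<in> kvec (m t (1,3))" using x y by (auto simp: pm_dim_pmod)
      then show ?thesis using phi_add[OF L[OF True] L'[of "t+\<delta>"] X[OF True]] True d
        by (simp add: fmap_def)
    qed (simp add: fmap_def)
  qed
  have c: "\<forall>t. \<forall>x \<in> kvec (pm_dim ?M t). \<forall>c. ?f t (\<lambda>j. c * x j) = (\<lambda>j. c * ?f t x j)"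
  proof (intro allI ballI)
    fix t and x :: "nat \<Rightarrow> 'k" and c assume x: "x \<in> kvec (pm_dim ?M t)"
    show "?f t (\<lambda>j. c * x j) = (\<lambda>j. c * ?f t x j)"
    proof (cases "0 \<le> t")
      case True
      then have "x \<in> kvec (m t (1,3))" using x by (auto simp: pm_dim_pmod)
      then show ?thesis using phi_scale[OF L[OF True] L'[of "t+\<delta>"] X[OF True]] True d
        by (simp add: fmap_def)
    qed (simp add: fmap_def)
  qed
  have nat: "\<forall>s t. s \<le> t \<longrightarrow> (\<forall>x \<in> kvec (pm_dim ?M s).
         ?f t (pm_tr ?M s t x) = pm_tr ?N (s + \<delta>) (t + \<delta>) (?f s x))"
  proof (intro allI impI ballI)
    fix s t and x :: "nat \<Rightarrow> 'k" assume st: "s \<le> t" and x: "x \<in> kvec (pm_dim ?M s)"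
    show "?f t (pm_tr ?M s t x) = pm_tr ?N (s + \<delta>) (t + \<delta>) (?f s x)"
    proof (cases "0 \<le> s")
      case False
      have 1: "pm_tr ?M s t x = (\<lambda>_. 0)" using False by (simp add: pm_tr_pmod)
      have 2: "?f s x = (\<lambda>_. 0)" using False by (simp add: fmap_def)
      show ?thesis unfolding 1 2 zerof zeroY ..
    next
      case True
      have t0: "0 \<le> t" using True st by simp
      have "?f t (pm_tr ?M s t x) = phi p (X2 t) (m t) (e2 t) (n (t+\<delta>)) (f2 (t+\<delta>))
              (phi p (X2 s) (m s) (e2 s) (m t) (e2 t) x)"
        using True st t0 by (simp add: pm_tr_pmod fmap_def)
      also have "\<dots> = phi p (X2 s) (m s) (e2 s) (n (t+\<delta>)) (f2 (t+\<delta>)) x"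
        by (rule phi_comp[OF L[OF True] L[OF t0] L'[of "t+\<delta>"] M(2)[OF True st] X[OF t0]]) (use t0 d in simp)
      also have "\<dots> = phi p (Y2 (s+\<delta>)) (n (s+\<delta>)) (f2 (s+\<delta>)) (n (t+\<delta>)) (f2 (t+\<delta>))
              (phi p (X2 s) (m s) (e2 s) (n (s+\<delta>)) (f2 (s+\<delta>)) x)"
        by (rule phi_comp[OF L[OF True] L'[of "s+\<delta>"] L'[of "t+\<delta>"] X(2)[OF True] M'(1,2,3)[of "s+\<delta>" "t+\<delta>"], symmetric])
           (use True st d in simp_all)
      also have "\<dots> = pm_tr ?N (s + \<delta>) (t + \<delta>) (?f s x)"
        using True st d by (simp add: pm_tr_pmod fmap_def)
      finally show ?thesis .
    qed
  qed
  show ?thesis unfolding pmorph_def using a b c nat by blast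
qed

lemma fmap_zero:
  fixes e1 :: "real \<Rightarrow> ('a::topological_space,'k::field) kchain \<Rightarrow> (nat \<times> nat \<times> nat \<Rightarrow> 'k)"
    and e3 :: "real \<Rightarrow> ('b::topological_space,'k) kchain \<Rightarrow> (nat \<times> nat \<times> nat \<Rightarrow> 'k)"
  assumes F: "fam p X1 X2 X3 m e1 e2 e3" and F': "fam p Y1 Y2 Y3 n f1 f2 f3"
    and C: "cross X1 X2 X3 Y1 Y2 Y3 \<delta>" and d: "0 \<le> \<delta>"
  shows "fmap p X2 m e2 n f2 \<delta> t (\<lambda>_. 0) = (\<lambda>_. 0)"
proof (cases "0 \<le> t")
  case True
  have L: "dlvl p (X1 t) (X2 t) (X3 t) (m t) (e1 t) (e2 t) (e3 t)" using F True by (simp add: fam_def)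
  have L': "dlvl p (Y1 (t+\<delta>)) (Y2 (t+\<delta>)) (Y3 (t+\<delta>)) (n (t+\<delta>)) (f1 (t+\<delta>)) (f2 (t+\<delta>)) (f3 (t+\<delta>))"
    using F' True d by (simp add: fam_def)
  have "X1 t \<subseteq> Y1 (t+\<delta>)" "X2 t \<subseteq> Y2 (t+\<delta>)" "X3 t \<subseteq> Y3 (t+\<delta>)" using C True by (auto simp: cross_def)
  then show ?thesis using phi_zero[OF L L'] True by (simp add: fmap_def)
qed (simp add: fmap_def)

lemma inter_gen:
  fixes e1 :: "real \<Rightarrow> ('a::topological_space,'k::field) kchain \<Rightarrow> (nat \<times> nat \<times> nat \<Rightarrow> 'k)"
    and e3 :: "real \<Rightarrow> ('b::topological_space,'k) kchain \<Rightarrow> (nat \<times> nat \<times> nat \<Rightarrow> 'k)"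
  assumes F: "fam p X1 X2 X3 m e1 e2 e3" and F': "fam p Y1 Y2 Y3 n f1 f2 f3"
    and C: "cross X1 X2 X3 Y1 Y2 Y3 \<delta>" and C': "cross Y1 Y2 Y3 X1 X2 X3 \<delta>" and d: "0 \<le> \<delta>"
  shows "fmap p Y2 n f2 m e2 \<delta> (t + \<delta>) (fmap p X2 m e2 n f2 \<delta> t x) = pm_tr (pmod_of p X2 m e2) t (t + 2 * \<delta>) x"
proof (cases "0 \<le> t")
  case False
  have 1: "fmap p X2 m e2 n f2 \<delta> t x = (\<lambda>_. 0)" using False by (simp add: fmap_def)
  have 2: "pm_tr (pmod_of p X2 m e2) t (t + 2 * \<delta>) x = (\<lambda>_. 0)" using False by (simp add: pm_tr_pmod)
  show ?thesis unfolding 1 2 fmap_zero[OF F' F C' d] ..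
next
  case True
  have t2: "0 \<le> t + \<delta>" "0 \<le> t + \<delta> + \<delta>" using True d by auto
  have L: "\<And>r. 0 \<le> r \<Longrightarrow> dlvl p (X1 r) (X2 r) (X3 r) (m r) (e1 r) (e2 r) (e3 r)" using F by (simp add: fam_def)
  have L': "\<And>r. 0 \<le> r \<Longrightarrow> dlvl p (Y1 r) (Y2 r) (Y3 r) (n r) (f1 r) (f2 r) (f3 r)" using F' by (simp add: fam_def)
  have X: "X2 t \<subseteq> Y2 (t+\<delta>)" using C True by (auto simp: cross_def)
  have Y: "Y1 (t+\<delta>) \<subseteq> X1 (t+\<delta>+\<delta>)" "Y2 (t+\<delta>) \<subseteq> X2 (t+\<delta>+\<delta>)" "Y3 (t+\<delta>) \<subseteq> X3 (t+\<delta>+\<delta>)"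
    using C' t2(1) unfolding cross_def by blast+
  have "fmap p Y2 n f2 m e2 \<delta> (t + \<delta>) (fmap p X2 m e2 n f2 \<delta> t x)
      = phi p (Y2 (t+\<delta>)) (n (t+\<delta>)) (f2 (t+\<delta>)) (m (t+\<delta>+\<delta>)) (e2 (t+\<delta>+\<delta>))
          (phi p (X2 t) (m t) (e2 t) (n (t+\<delta>)) (f2 (t+\<delta>)) x)"
    using True t2 by (simp add: fmap_def)
  also have "\<dots> = phi p (X2 t) (m t) (e2 t) (m (t+\<delta>+\<delta>)) (e2 (t+\<delta>+\<delta>)) x"
    by (rule phi_comp[OF L[OF True] L'[OF t2(1)] L[OF t2(2)] X Y])
  also have "\<dots> = pm_tr (pmod_of p X2 m e2) t (t + 2 * \<delta>) x"
    using True d by (simp add: pm_tr_pmod add.assoc)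
  finally show ?thesis .
qed

lemma interleaved_gen:
  fixes e1 :: "real \<Rightarrow> ('a::topological_space,'k::field) kchain \<Rightarrow> (nat \<times> nat \<times> nat \<Rightarrow> 'k)"
    and e3 :: "real \<Rightarrow> ('b::topological_space,'k) kchain \<Rightarrow> (nat \<times> nat \<times> nat \<Rightarrow> 'k)"
  assumes F: "fam p X1 X2 X3 m e1 e2 e3" and F': "fam p Y1 Y2 Y3 n f1 f2 f3"
    and C: "cross X1 X2 X3 Y1 Y2 Y3 \<delta>" and C': "cross Y1 Y2 Y3 X1 X2 X3 \<delta>" and d: "0 \<le> \<delta>"
  shows "interleaved \<delta> (pmod_of p X2 m e2) (pmod_of p Y2 n f2)"
  unfolding interleaved_def
  using pmorph_gen[OF F F' C d] pmorph_gen[OF F' F C' d] inter_gen[OF F F' C C' d] inter_gen[OF F' F C' C d]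
  by blast

lemma inf_le_iff:
  fixes f :: "'a \<Rightarrow> real"
  assumes S: "S \<noteq> {}" and nn: "\<And>u. u \<in> S \<Longrightarrow> 0 \<le> f u"
  shows "(INF u\<in>S. f u) \<le> r \<longleftrightarrow> (\<forall>\<epsilon>>0. \<exists>u\<in>S. f u < r + \<epsilon>)"
proof -
  have bdd: "bdd_below (f ` S)" by (rule bdd_belowI2[where m=0]) (rule nn)
  show ?thesis
  proof
    assume H: "(INF u\<in>S. f u) \<le> r"
    show "\<forall>\<epsilon>>0. \<exists>u\<in>S. f u < r + \<epsilon>"
    proof (intro allI impI)
      fix \<epsilon> :: real assume "0 < \<epsilon>"
      then have "(INF u\<in>S. f u) < r + \<epsilon>" using H by simp
      then show "\<exists>u\<in>S. f u < r + \<epsilon>" using cINF_less_iff[OF S bdd] by blast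
    qed
  next
    assume H: "\<forall>\<epsilon>>0. \<exists>u\<in>S. f u < r + \<epsilon>"
    show "(INF u\<in>S. f u) \<le> r"
    proof (rule ccontr)
      assume "\<not> (INF u\<in>S. f u) \<le> r"
      then have "0 < (INF u\<in>S. f u) - r" by simp
      then obtain u where u: "u \<in> S" "f u < r + ((INF u\<in>S. f u) - r)" using H by blast
      have "(INF u\<in>S. f u) \<le> f u" using cINF_lower[OF bdd u(1)] .
      then show False using u(2) by simp
    qed
  qed
qed

lemma thick_iff: "z \<in> thick S r \<longleftrightarrow> S \<noteq> {} \<and> (\<forall>\<epsilon>>0. \<exists>u\<in>S. dist z u < r + \<epsilon>)"
  unfolding thick_def using inf_le_iff[of S "\<lambda>u. dist z u" r] by auto

lemma dmax_nn: "0 \<le> dmax z w"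
  by (simp add: dmax_def le_max_iff_disj)

lemma thick2_iff: "z \<in> thick2 S r \<longleftrightarrow> S \<noteq> {} \<and> (\<forall>\<epsilon>>0. \<exists>u\<in>S. dmax z u < r + \<epsilon>)"
proof -
  have "S \<noteq> {} \<Longrightarrow> (INF u\<in>S. dmax z u) \<le> r \<longleftrightarrow> (\<forall>\<epsilon>>0. \<exists>u\<in>S. dmax z u < r + \<epsilon>)"
    by (rule inf_le_iff) (simp_all add: dmax_nn)
  then show ?thesis unfolding thick2_def by auto
qed

lemma dmax_tri: "dmax z w \<le> dmax z u + dmax u w"
proof -
  have "dist (fst z) (fst w) \<le> dist (fst z) (fst u) + dist (fst u) (fst w)" by (rule dist_triangle)
  moreover have "dist (snd z) (snd w) \<le> dist (snd z) (snd u) + dist (snd u) (snd w)" by (rule dist_triangle)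
  ultimately show ?thesis unfolding dmax_def by (smt (verit) max.cobounded1 max.cobounded2 max.absorb_iff1 max_def)
qed

lemma fst_le_dmax: "dist (fst z) (fst w) \<le> dmax z w" by (simp add: dmax_def)
lemma snd_le_dmax: "dist (snd z) (snd w) \<le> dmax z w" by (simp add: dmax_def)

lemma thick_mono: "s \<le> r \<Longrightarrow> thick S s \<subseteq> thick S r"
  unfolding thick_def by auto

lemma thick2_mono: "s \<le> r \<Longrightarrow> thick2 S s \<subseteq> thick2 S r"
  unfolding thick2_def by auto

lemma thick_trans:
  assumes "A \<subseteq> thick B d" shows "thick A r \<subseteq> thick B (r + d)"
proof
  fix z assume z: "z \<in> thick A r"
  then have An: "A \<noteq> {}" and H: "\<forall>\<epsilon>>0. \<exists>u\<in>A. dist z u < r + \<epsilon>" by (auto simp: thick_iff)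
  obtain a where "a \<in> A" using An by blast
  then have Bn: "B \<noteq> {}" using assms by (auto simp: thick_iff)
  have "\<forall>\<epsilon>>0. \<exists>b\<in>B. dist z b < r + d + \<epsilon>"
  proof (intro allI impI)
    fix \<epsilon> :: real assume e: "0 < \<epsilon>"
    obtain a where a: "a \<in> A" "dist z a < r + \<epsilon>/2" using H e by (meson half_gt_zero)
    have "a \<in> thick B d" using a(1) assms by blast
    then obtain b where b: "b \<in> B" "dist a b < d + \<epsilon>/2" using e by (meson half_gt_zero thick_iff)
    have "dist z b \<le> dist z a + dist a b" by (rule dist_triangle)
    then show "\<exists>b\<in>B. dist z b < r + d + \<epsilon>" using a b by (intro bexI[of _ b]) auto
  qed
  then show "z \<in> thick B (r + d)" using Bn by (simp add: thick_iff)
qed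

lemma thick2_trans:
  assumes "A \<subseteq> thick2 B d" shows "thick2 A r \<subseteq> thick2 B (r + d)"
proof
  fix z assume z: "z \<in> thick2 A r"
  then have An: "A \<noteq> {}" and H: "\<forall>\<epsilon>>0. \<exists>u\<in>A. dmax z u < r + \<epsilon>" by (auto simp: thick2_iff)
  obtain a where "a \<in> A" using An by blast
  then have Bn: "B \<noteq> {}" using assms by (auto simp: thick2_iff)
  have "\<forall>\<epsilon>>0. \<exists>b\<in>B. dmax z b < r + d + \<epsilon>"
  proof (intro allI impI)
    fix \<epsilon> :: real assume e: "0 < \<epsilon>"
    obtain a where a: "a \<in> A" "dmax z a < r + \<epsilon>/2" using H e by (meson half_gt_zero)
    have "a \<in> thick2 B d" using a(1) assms by blast
    then obtain b where b: "b \<in> B" "dmax a b < d + \<epsilon>/2" using e by (meson half_gt_zero thick2_iff)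
    have "dmax z b \<le> dmax z a + dmax a b" by (rule dmax_tri)
    then show "\<exists>b\<in>B. dmax z b < r + d + \<epsilon>" using a b by (intro bexI[of _ b]) auto
  qed
  then show "z \<in> thick2 B (r + d)" using Bn by (simp add: thick2_iff)
qed

lemma graph_fst:
  assumes "graph h U \<subseteq> thick2 (graph h' U') d" shows "U \<subseteq> thick U' d"
proof
  fix u assume u: "u \<in> U"
  then have "(u, h u) \<in> thick2 (graph h' U') d" using assms by (auto simp: graph_def)
  then have n: "graph h' U' \<noteq> {}" and H: "\<forall>\<epsilon>>0. \<exists>w\<in>graph h' U'. dmax (u, h u) w < d + \<epsilon>"
    by (auto simp: thick2_iff)
  have "U' \<noteq> {}" using n by (auto simp: graph_def)
  moreover have "\<forall>\<epsilon>>0. \<exists>v\<in>U'. dist u v < d + \<epsilon>"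
  proof (intro allI impI)
    fix \<epsilon> :: real assume "0 < \<epsilon>"
    then obtain w where w: "w \<in> graph h' U'" "dmax (u, h u) w < d + \<epsilon>" using H by blast
    then obtain v where v: "v \<in> U'" "w = (v, h' v)" by (auto simp: graph_def)
    have "dist u v \<le> dmax (u, h u) w" using fst_le_dmax[of "(u, h u)" w] v by simp
    then show "\<exists>v\<in>U'. dist u v < d + \<epsilon>" using v w by (intro bexI[of _ v]) auto
  qed
  ultimately show "u \<in> thick U' d" by (simp add: thick_iff)
qed

lemma graph_snd:
  assumes "graph h U \<subseteq> thick2 (graph h' U') d" shows "h ` U \<subseteq> thick (h' ` U') d"
proof
  fix y assume "y \<in> h ` U"
  then obtain u where u: "u \<in> U" "y = h u" by blast
  then have "(u, h u) \<in> thick2 (graph h' U') d" using assms by (auto simp: graph_def)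
  then have n: "graph h' U' \<noteq> {}" and H: "\<forall>\<epsilon>>0. \<exists>w\<in>graph h' U'. dmax (u, h u) w < d + \<epsilon>"
    by (auto simp: thick2_iff)
  have "h' ` U' \<noteq> {}" using n by (auto simp: graph_def)
  moreover have "\<forall>\<epsilon>>0. \<exists>v\<in>h' ` U'. dist y v < d + \<epsilon>"
  proof (intro allI impI)
    fix \<epsilon> :: real assume "0 < \<epsilon>"
    then obtain w where w: "w \<in> graph h' U'" "dmax (u, h u) w < d + \<epsilon>" using H by blast
    then obtain v where v: "v \<in> U'" "w = (v, h' v)" by (auto simp: graph_def)
    have "dist y (h' v) \<le> dmax (u, h u) w" using snd_le_dmax[of "(u, h u)" w] v u by simp
    then show "\<exists>v\<in>h' ` U'. dist y v < d + \<epsilon>" using v w by (intro bexI[of _ "h' v"]) auto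
  qed
  ultimately show "y \<in> thick (h' ` U') d" by (simp add: thick_iff)
qed

lemma fst_thick2: "fst ` thick2 (graph h U) r \<subseteq> thick U r"
proof
  fix x assume "x \<in> fst ` thick2 (graph h U) r"
  then obtain z where z: "z \<in> thick2 (graph h U) r" "x = fst z" by blast
  then have n: "graph h U \<noteq> {}" and H: "\<forall>\<epsilon>>0. \<exists>w\<in>graph h U. dmax z w < r + \<epsilon>"
    by (auto simp: thick2_iff)
  have "U \<noteq> {}" using n by (auto simp: graph_def)
  moreover have "\<forall>\<epsilon>>0. \<exists>v\<in>U. dist x v < r + \<epsilon>"
  proof (intro allI impI)
    fix \<epsilon> :: real assume "0 < \<epsilon>"
    then obtain w where w: "w \<in> graph h U" "dmax z w < r + \<epsilon>" using H by blast
    then obtain v where v: "v \<in> U" "w = (v, h v)" by (auto simp: graph_def)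
    have "dist x v \<le> dmax z w" using fst_le_dmax[of z w] v z by simp
    then show "\<exists>v\<in>U. dist x v < r + \<epsilon>" using v w by (intro bexI[of _ v]) auto
  qed
  ultimately show "x \<in> thick U r" by (simp add: thick_iff)
qed

lemma snd_thick2: "snd ` thick2 (graph h U) r \<subseteq> thick (h ` U) r"
proof
  fix x assume "x \<in> snd ` thick2 (graph h U) r"
  then obtain z where z: "z \<in> thick2 (graph h U) r" "x = snd z" by blast
  then have n: "graph h U \<noteq> {}" and H: "\<forall>\<epsilon>>0. \<exists>w\<in>graph h U. dmax z w < r + \<epsilon>"
    by (auto simp: thick2_iff)
  have "h ` U \<noteq> {}" using n by (auto simp: graph_def)
  moreover have "\<forall>\<epsilon>>0. \<exists>v\<in>h ` U. dist x v < r + \<epsilon>"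
  proof (intro allI impI)
    fix \<epsilon> :: real assume "0 < \<epsilon>"
    then obtain w where w: "w \<in> graph h U" "dmax z w < r + \<epsilon>" using H by blast
    then obtain v where v: "v \<in> U" "w = (v, h v)" by (auto simp: graph_def)
    have "dist x (h v) \<le> dmax z w" using snd_le_dmax[of z w] v z by simp
    then show "\<exists>v\<in>h ` U. dist x v < r + \<epsilon>" using v w by (intro bexI[of _ "h v"]) auto
  qed
  ultimately show "x \<in> thick (h ` U) r" by (simp add: thick_iff)
qed

lemma cont_fst: "fst ` X2 \<subseteq> X1 \<Longrightarrow> continuous_map (top_of_set X2) (top_of_set X1) fst"
  by (auto simp: continuous_map_subtopology_eu intro!: continuous_intros)

lemma cont_snd: "snd ` X2 \<subseteq> X3 \<Longrightarrow> continuous_map (top_of_set X2) (top_of_set X3) snd"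
  by (auto simp: continuous_map_subtopology_eu intro!: continuous_intros)

lemma fam_graph:
  fixes U :: "('a::metric_space) set" and h :: "'a \<Rightarrow> 'a"
    and e1 :: "real \<Rightarrow> ('a,'k::field) kchain \<Rightarrow> (nat \<times> nat \<times> nat \<Rightarrow> 'k)"
  assumes dec: "\<forall>r\<ge>0. is_decomp p (thick U r) (thick2 (graph h U) r) (thick (h ` U) r)
                        (m r) (e1 r) (e2 r) (e3 r)"
  shows "fam p (\<lambda>r. thick U r) (\<lambda>r. thick2 (graph h U) r) (\<lambda>r. thick (h ` U) r) m e1 e2 e3"
  unfolding fam_def
proof (intro conjI allI impI)
  fix r :: real assume r: "0 \<le> r"
  have "\<forall>z\<in>kcycles p (thick2 (graph h U) r). kpush p fst (z::('a\<times>'a,'k) kchain) \<in> kcycles p (thick U r) \<and>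
           kpush p snd z \<in> kcycles p (thick (h ` U) r)"
    using kpush_cycle[OF _ cont_fst[OF fst_thick2]] kpush_cycle[OF _ cont_snd[OF snd_thick2]] by blast
  then show "dlvl p (thick U r) (thick2 (graph h U) r) (thick (h ` U) r) (m r) (e1 r) (e2 r) (e3 r)"
    using dec r by (simp add: dlvl_def)
next
  fix s r :: real assume "0 \<le> s" "s \<le> r"
  then show "thick U s \<subseteq> thick U r" "thick2 (graph h U) s \<subseteq> thick2 (graph h U) r"
    "thick (h ` U) s \<subseteq> thick (h ` U) r" by (auto intro: thick_mono thick2_mono dest: thick_mono thick2_mono)
qed

lemma cross_graph:
  assumes "graph h U \<subseteq> thick2 (graph h' U') d"
  shows "cross (\<lambda>r. thick U r) (\<lambda>r. thick2 (graph h U) r) (\<lambda>r. thick (h ` U) r)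
               (\<lambda>r. thick U' r) (\<lambda>r. thick2 (graph h' U') r) (\<lambda>r. thick (h' ` U') r) d"
  unfolding cross_def
  using thick_trans[OF graph_fst[OF assms]] thick2_trans[OF assms] thick_trans[OF graph_snd[OF assms]]
  by blast

theorem mainTheorem8:
  fixes U U' :: "(real^'n) set" and h h' :: "real^'n \<Rightarrow> real^'n" and p :: nat
    and m m' :: "real \<Rightarrow> nat \<times> nat \<Rightarrow> nat"
    and e1 e1' :: "real \<Rightarrow> (real^'n, 'k::field) kchain \<Rightarrow> (nat \<times> nat \<times> nat \<Rightarrow> 'k)"
    and e2 e2' :: "real \<Rightarrow> ((real^'n) \<times> (real^'n), 'k) kchain \<Rightarrow> (nat \<times> nat \<times> nat \<Rightarrow> 'k)"
    and e3 e3' :: "real \<Rightarrow> (real^'n, 'k) kchain \<Rightarrow> (nat \<times> nat \<times> nat \<Rightarrow> 'k)"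
  assumes fin: "\<forall>r\<ge>0. kfindim TYPE('k) p (thick U r) \<and> kfindim TYPE('k) p (thick2 (graph h U) r)
                        \<and> kfindim TYPE('k) p (thick (h ` U) r)"
    and fin': "\<forall>r\<ge>0. kfindim TYPE('k) p (thick U' r) \<and> kfindim TYPE('k) p (thick2 (graph h' U') r)
                        \<and> kfindim TYPE('k) p (thick (h' ` U') r)"
    and dec: "\<forall>r\<ge>0. is_decomp p (thick U r) (thick2 (graph h U) r) (thick (h ` U) r)
                        (m r) (e1 r) (e2 r) (e3 r)"
    and dec': "\<forall>r\<ge>0. is_decomp p (thick U' r) (thick2 (graph h' U') r) (thick (h' ` U') r)
                        (m' r) (e1' r) (e2' r) (e3' r)"
  shows "interleaving_distance (pmod_of p (\<lambda>r. thick2 (graph h U) r) m e2)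
                               (pmod_of p (\<lambda>r. thick2 (graph h' U') r) m' e2')
         \<le> hausdorff2 (graph h U) (graph h' U')"
proof -
  have F: "fam p (\<lambda>r. thick U r) (\<lambda>r. thick2 (graph h U) r) (\<lambda>r. thick (h ` U) r) m e1 e2 e3"
    by (rule fam_graph[OF dec])
  have F': "fam p (\<lambda>r. thick U' r) (\<lambda>r. thick2 (graph h' U') r) (\<lambda>r. thick (h' ` U') r) m' e1' e2' e3'"
    by (rule fam_graph[OF dec'])
  have sub: "{ereal \<delta> | \<delta>. 0 \<le> \<delta> \<and> graph h U \<subseteq> thick2 (graph h' U') \<delta> \<and> graph h' U' \<subseteq> thick2 (graph h U) \<delta>}
     \<subseteq> {ereal \<delta> | \<delta>. 0 \<le> \<delta> \<and> interleaved \<delta> (pmod_of p (\<lambda>r. thick2 (graph h U) r) m e2)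
                               (pmod_of p (\<lambda>r. thick2 (graph h' U') r) m' e2')}"
  proof
    fix x assume "x \<in> {ereal \<delta> | \<delta>. 0 \<le> \<delta> \<and> graph h U \<subseteq> thick2 (graph h' U') \<delta> \<and> graph h' U' \<subseteq> thick2 (graph h U) \<delta>}"
    then obtain \<delta> where d: "x = ereal \<delta>" "0 \<le> \<delta>" "graph h U \<subseteq> thick2 (graph h' U') \<delta>"
      "graph h' U' \<subseteq> thick2 (graph h U) \<delta>" by blast
    have "interleaved \<delta> (pmod_of p (\<lambda>r. thick2 (graph h U) r) m e2) (pmod_of p (\<lambda>r. thick2 (graph h' U') r) m' e2')"
      by (rule interleaved_gen[OF F F' cross_graph[OF d(3)] cross_graph[OF d(4)] d(2)])
    then show "x \<in> {ereal \<delta> | \<delta>. 0 \<le> \<delta> \<and> interleaved \<delta> (pmod_of p (\<lambda>r. thick2 (graph h U) r) m e2)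
                               (pmod_of p (\<lambda>r. thick2 (graph h' U') r) m' e2')}"
      using d by blast
  qed
  show ?thesis
    unfolding interleaving_distance_def hausdorff2_def by (rule Inf_superset_mono[OF sub])
qed

end
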